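(* Let $(F,G,H)$ be an admissible triple, let $\Omega_{\mathfrak{A}}=(\mathscr{M},\langle\cdot,\cdot\rangle_{\mathscr{M}},\mathsf{D}_{\mathscr{M}},\mathfrak{A},\mathsf{L}_{\mathfrak{A}})$ and $\Omega_{\mathfrak{B}}=(\mathscr{N},\langle\cdot,\cdot\rangle_{\mathscr{N}},\mathsf{D}_{\mathscr{N}},\mathfrak{B},\mathsf{L}_{\mathfrak{B}})$ be metrized quantum vector bundles of type $(F,G,H)$, and let $\gamma=(\Omega_{\mathfrak{A}},\Omega_{\mathfrak{B}},\mathfrak{D},x,\pi_{\mathfrak{A}},\pi_{\mathfrak{B}},(\omega_j)_{j\in J},(\eta_j)_{j\in J})$ be a modular bridge from $\Omega_{\mathfrak{A}}$ to $\Omega_{\mathfrak{B}}$. If $\omega\in\mathscr{M}$ with $\mathsf{D}_{\mathscr{M}}(\omega)\le1$ and $j\in J$ satisfies $\mathrm{k}_{\Omega_{\mathfrak{A}}}(\omega,\omega_j)\le\iota(\gamma)$, then $\mathrm{dn}_\gamma(\omega,\eta_j)\le\rho(\gamma)$; the symmetric statement (with the roles of $\Omega_{\mathfrak{A}}$ and $\Omega_{\mathfrak{B}}$, and of anchors and co-anchors, exchanged) also holds. Consequently $$\max\left\{\begin{array}{l}\sup_{a\in\mathfrak{sa}(\mathfrak{A}),\mathsf{L}_{\mathfrak{A}}(a)\le1}\ \inf_{b\in\mathfrak{sa}(\mathfrak{B}),\mathsf{L}_{\mathfrak{B}}(b)\le1}\mathrm{bn}_\gamma(a,b),\\ \sup_{b\in\mathfrak{sa}(\mathfrak{B}),\mathsf{L}_{\mathfrak{B}}(b)\le1}\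 \inf_{a\in\mathfrak{sa}(\mathfrak{A}),\mathsf{L}_{\mathfrak{A}}(a)\le1}\mathrm{bn}_\gamma(a,b),\\ \sup_{\omega\in\mathscr{D}_1(\Omega_{\mathfrak{A}})}\ \inf_{\eta\in\mathscr{D}_1(\Omega_{\mathfrak{B}})}\mathrm{dn}_\gamma(\omega,\eta),\\ \sup_{\eta\in\mathscr{D}_1(\Omega_{\mathfrak{B}})}\ \inf_{\omega\in\mathscr{D}_1(\Omega_{\mathfrak{A}})}\mathrm{dn}_\gamma(\omega,\eta)\end{array}\right\}\le\rho(\gamma).$$
   Context: Notation: for a unital C*-algebra $\mathfrak{A}$, $\mathfrak{sa}(\mathfrak{A})$ denotes the set of self-adjoint elements and $\mathscr{S}(\mathfrak{A})$ the state space; $\Re a=(a+a^* )/2$, $\Im a=(a-a^* )/(2i)$; $a\circ b=(ab+ba)/2$, $\{a,b\}=(ab-ba)/(2i)$. Convention: a seminorm $\mathsf{L}$ defined on a subspace $\mathrm{dom}(\mathsf{L})$ is extended by $\infty$ outside it, with $0\cdot\infty=0$. A function $F:[0,\infty)^4\to[0,\infty)$ is admissible if it is nondecreasing for the product order and $x_1x_3+x_2x_4\le F(x_1,x_2,x_3,x_4)$. An $F$-quasi-Leibniz quantum compact metric space $(\mathfrak{A},\mathsf{L})$ is a unital C*-algebra $\mathfrak{A}$ with a seminorm $\mathsf{L}$ on a dense subspace $\mathrm{dom}(\mathsf{L})\subseteq\mathfrak{sa}(\mathfrak{A})$ closed under $\circ$ and $\{\cdot,\cdot\}$, such that: (i)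 $\{a\in\mathrm{dom}(\mathsf{L}):\mathsf{L}(a)=0\}=\mathbb{R}1_{\mathfrak{A}}$; (ii) $\mathrm{mk}_{\mathsf{L}}(\varphi,\psi)=\sup\{|\varphi(a)-\psi(a)|:a\in\mathfrak{sa}(\mathfrak{A}),\mathsf{L}(a)\le1\}$ metrizes the weak* topology on $\mathscr{S}(\mathfrak{A})$; (iii) $\{a:\mathsf{L}(a)\le1\}$ is norm closed; (iv) $\max\{\mathsf{L}(a\circ b),\mathsf{L}(\{a,b\})\}\le F(\|a\|,\|b\|,\mathsf{L}(a),\mathsf{L}(b))$ for $a,b\in\mathrm{dom}(\mathsf{L})$. A triple $(F,G,H)$ is admissible if $F$ is admissible, $G:[0,\infty)^3\to[0,\infty)$ is nondecreasing in each variable with $(x+y)z\le G(x,y,z)$, and $H:[0,\infty)^2\to[0,\infty)$ is nondecreasing in each variable with $2xy\le H(x,y)$. A left Hilbert $\mathfrak{A}$-module $(\mathscr{M},\langle\cdot,\cdot\rangle_{\mathscr{M}})$ is a left $\mathfrak{A}$-module with a map $\langle\cdot,\cdot\rangle_{\mathscr{M}}:\mathscr{M}\times\mathscr{M}\to\mathfrak{A}$, linear in the first and conjugate-linear in the second variable, with $\langle a\omega,\eta\rangle=a\langle\omega,\eta\rangle$, $\langle\omega,\eta\rangle^*=\langle\eta,\omega\rangle$, $\langle\omega,\omega\rangle\ge0$ with equality only for $\omega=0$, and complete for $\|\omega\|_{\mathscr{M}}=\|\langle\omega,\omega\rangle_{\mathscr{M}}\|_{\mathfrak{A}}^{1/2}$.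 A metrized quantum vector bundle of type $(F,G,H)$ is a tuple $\Omega=(\mathscr{M},\langle\cdot,\cdot\rangle_{\mathscr{M}},\mathsf{D},\mathfrak{A},\mathsf{L})$ where $(\mathfrak{A},\mathsf{L})$ is an $F$-quasi-Leibniz quantum compact metric space (the base space), $(\mathscr{M},\langle\cdot,\cdot\rangle_{\mathscr{M}})$ is a left Hilbert $\mathfrak{A}$-module, and $\mathsf{D}$ (the D-norm) is a norm on a dense complex subspace $\mathrm{dom}(\mathsf{D})$ of $\mathscr{M}$ (extended by $\infty$) such that: (1) $\|\omega\|_{\mathscr{M}}\le\mathsf{D}(\omega)$; (2) $\{\omega:\mathsf{D}(\omega)\le1\}$ is compact for $\|\cdot\|_{\mathscr{M}}$; (3) $\mathsf{D}(a\omega)\le G(\|a\|_{\mathfrak{A}},\mathsf{L}(a),\mathsf{D}(\omega))$ for $a\in\mathfrak{sa}(\mathfrak{A})$, $\omega\in\mathscr{M}$; (4) $\max\{\mathsf{L}(\Re\langle\omega,\eta\rangle_{\mathscr{M}}),\mathsf{L}(\Im\langle\omega,\eta\rangle_{\mathscr{M}})\}\le H(\mathsf{D}(\omega),\mathsf{D}(\eta))$. For $r\ge0$, $\mathscr{D}_r(\Omega)=\{\omega:\mathsf{D}(\omega)\le r\}$. The modular Monge–Kantorovich metric is $\mathrm{k}_\Omega(\omega,\eta)=\sup\{\|\langle\omega,\xi\rangle_{\mathscr{M}}-\langle\eta,\xi\rangle_{\mathscr{M}}\|_{\mathfrak{A}}:\xi\in\mathscr{D}_1(\Omega)\}$. Hausdorff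 distance: for a pseudo-metric $d$ on a set $X$ and nonempty $A,B\subseteq X$, $\mathrm{Haus}_d(A,B)=\max\{\sup_{a\in A}\inf_{b\in B}d(a,b),\sup_{b\in B}\inf_{a\in A}d(a,b)\}$. For a unital C*-algebra $\mathfrak{D}$ and $x\in\mathfrak{D}$, the 1-level set is $\mathscr{S}_1(\mathfrak{D}|x)=\{\varphi\in\mathscr{S}(\mathfrak{D}):\varphi((1-x)^*(1-x))=\varphi((1-x)(1-x)^* )=0\}$. Modular bridge: given metrized quantum vector bundles $\Omega_{\mathfrak{A}}=(\mathscr{M},\langle\cdot,\cdot\rangle_{\mathscr{M}},\mathsf{D}_{\mathscr{M}},\mathfrak{A},\mathsf{L}_{\mathfrak{A}})$ and $\Omega_{\mathfrak{B}}=(\mathscr{N},\langle\cdot,\cdot\rangle_{\mathscr{N}},\mathsf{D}_{\mathscr{N}},\mathfrak{B},\mathsf{L}_{\mathfrak{B}})$, a modular bridge from $\Omega_{\mathfrak{A}}$ to $\Omega_{\mathfrak{B}}$ is a tuple $\gamma=(\Omega_{\mathfrak{A}},\Omega_{\mathfrak{B}},\mathfrak{D},x,\pi_{\mathfrak{A}},\pi_{\mathfrak{B}},(\omega_j)_{j\in J},(\eta_j)_{j\in J})$ where $\mathfrak{D}$ is a unital C*-algebra, $x\in\mathfrak{D}$ (the pivot) satisfies $\|x\|_{\mathfrak{D}}=1$ and $\mathscr{S}_1(\mathfrak{D}|x)\neq\emptyset$, $\pi_{\mathfrak{A}}:\mathfrak{A}\to\mathfrak{D}$ and $\pi_{\mathfrak{B}}:\mathfrak{B}\to\mathfrak{D}$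 are unital injective $*$-morphisms, $J$ is a nonempty set, $\mathsf{D}_{\mathscr{M}}(\omega_j)\le1$ (anchors) and $\mathsf{D}_{\mathscr{N}}(\eta_j)\le1$ (co-anchors) for all $j\in J$. Associated quantities: the bridge seminorm $\mathrm{bn}_\gamma(a,b)=\|\pi_{\mathfrak{A}}(a)x-x\pi_{\mathfrak{B}}(b)\|_{\mathfrak{D}}$ for $a\in\mathfrak{A},b\in\mathfrak{B}$; the basic reach $\rho_\flat(\gamma)=\max\{\sup_{a\in\mathfrak{sa}(\mathfrak{A}),\mathsf{L}_{\mathfrak{A}}(a)\le1}\inf_{b\in\mathfrak{sa}(\mathfrak{B}),\mathsf{L}_{\mathfrak{B}}(b)\le1}\mathrm{bn}_\gamma(a,b),\ \sup_{b\in\mathfrak{sa}(\mathfrak{B}),\mathsf{L}_{\mathfrak{B}}(b)\le1}\inf_{a\in\mathfrak{sa}(\mathfrak{A}),\mathsf{L}_{\mathfrak{A}}(a)\le1}\mathrm{bn}_\gamma(a,b)\}$; the height $\varsigma(\gamma)=\max\{\mathrm{Haus}_{\mathrm{mk}_{\mathsf{L}_{\mathfrak{A}}}}(\mathscr{S}(\mathfrak{A}),\{\psi\circ\pi_{\mathfrak{A}}:\psi\in\mathscr{S}_1(\mathfrak{D}|x)\}),\ \mathrm{Haus}_{\mathrm{mk}_{\mathsf{L}_{\mathfrak{B}}}}(\mathscr{S}(\mathfrak{B}),\{\psi\circ\pi_{\mathfrak{B}}:\psi\in\mathscr{S}_1(\mathfrak{D}|x)\})\}$; the deck seminorm on $\mathscr{M}\oplus\mathscr{N}$,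 $\mathrm{dn}_\gamma(\omega,\eta)=\sup_{k\in J}\max\{\mathrm{bn}_\gamma(\langle\omega,\omega_k\rangle_{\mathscr{M}},\langle\eta,\eta_k\rangle_{\mathscr{N}}),\ \mathrm{bn}_\gamma(\langle\omega_k,\omega\rangle_{\mathscr{M}},\langle\eta_k,\eta\rangle_{\mathscr{N}})\}$; the modular reach $\rho_\sharp(\gamma)=\sup_{j\in J}\mathrm{dn}_\gamma(\omega_j,\eta_j)$; the imprint $\iota(\gamma)=\max\{\mathrm{Haus}_{\mathrm{k}_{\Omega_{\mathfrak{A}}}}(\{\omega_j:j\in J\},\mathscr{D}_1(\Omega_{\mathfrak{A}})),\ \mathrm{Haus}_{\mathrm{k}_{\Omega_{\mathfrak{B}}}}(\{\eta_j:j\in J\},\mathscr{D}_1(\Omega_{\mathfrak{B}}))\}$; the reach $\rho(\gamma)=\max\{\rho_\flat(\gamma),\rho_\sharp(\gamma)+\iota(\gamma)\}$; the length $\lambda(\gamma)=\max\{\varsigma(\gamma),\rho(\gamma)\}$. *)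

theory Defs
  imports "HOL-Analysis.Analysis"
begin

text \<open>A unital C*-algebra is modelled on a type 'a which is a (real) unital Banach
algebra (class real_normed_algebra_1 + banach: norm, completeness, submultiplicativity,
norm of the unit is 1); the complex scalar multiplication and the involution are
extra data satisfying the C*-axioms.\<close>

record 'a cstar_data =
  csmul :: "complex \<Rightarrow> 'a \<Rightarrow> 'a"
  cst :: "'a \<Rightarrow> 'a"

definition unital_cstar :: "('a::{real_normed_algebra_1,banach}) cstar_data \<Rightarrow> bool" where
  "unital_cstar A \<longleftrightarrow>
     (\<forall>r a. csmul A (complex_of_real r) a = r *\<^sub>R a) \<and>
     (\<forall>c d a. csmul A (c * d) a = csmul A c (csmul A d a)) \<and>
     (\<forall>c d a. csmul A (c + d) a = csmul A c a + csmul A d a) \<and>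
     (\<forall>c a b. csmul A c (a + b) = csmul A c a + csmul A c b) \<and>
     (\<forall>c a b. csmul A c (a * b) = csmul A c a * b \<and> csmul A c (a * b) = a * csmul A c b) \<and>
     (\<forall>c a. norm (csmul A c a) = cmod c * norm a) \<and>
     (\<forall>a b. cst A (a + b) = cst A a + cst A b) \<and>
     (\<forall>c a. cst A (csmul A c a) = csmul A (cnj c) (cst A a)) \<and>
     (\<forall>a b. cst A (a * b) = cst A b * cst A a) \<and>
     (\<forall>a. cst A (cst A a) = a) \<and>
     (\<forall>a. norm (cst A a * a) = (norm a)\<^sup>2)"

definition sa :: "'a cstar_data \<Rightarrow> 'a set" where
  "sa A = {a. cst A a = a}"

definition ReC :: "('a::real_vector) cstar_data \<Rightarrow> 'a \<Rightarrow> 'a" where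
  "ReC A a = (1/2) *\<^sub>R (a + cst A a)"

definition ImC :: "('a::real_vector) cstar_data \<Rightarrow> 'a \<Rightarrow> 'a" where
  "ImC A a = csmul A (- \<i> / 2) (a - cst A a)"

definition jordan :: "('a::{real_vector,times}) \<Rightarrow> 'a \<Rightarrow> 'a" where
  "jordan a b = (1/2) *\<^sub>R (a * b + b * a)"

definition lie :: "('a::{real_vector,times}) cstar_data \<Rightarrow> 'a \<Rightarrow> 'a \<Rightarrow> 'a" where
  "lie A a b = csmul A (- \<i> / 2) (a * b - b * a)"

definition cspectrum :: "('a::ring_1) cstar_data \<Rightarrow> 'a \<Rightarrow> complex set" where
  "cspectrum A a = {z. \<not> (\<exists>b. (a - csmul A z 1) * b = 1 \<and> b * (a - csmul A z 1) = 1)}"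

definition positive :: "('a::ring_1) cstar_data \<Rightarrow> 'a \<Rightarrow> bool" where
  "positive A a \<longleftrightarrow> a \<in> sa A \<and> cspectrum A a \<subseteq> complex_of_real ` {0..}"

definition states :: "('a::ring_1) cstar_data \<Rightarrow> ('a \<Rightarrow> complex) set" where
  "states A = {\<phi>. (\<forall>a b. \<phi> (a + b) = \<phi> a + \<phi> b) \<and> (\<forall>c a. \<phi> (csmul A c a) = c * \<phi> a)
                 \<and> (\<forall>a. positive A a \<longrightarrow> \<phi> a \<in> complex_of_real ` {0..}) \<and> \<phi> 1 = 1}"

definition unital_star_mono :: "('a::ring_1) cstar_data \<Rightarrow> ('d::ring_1) cstar_data \<Rightarrow> ('a \<Rightarrow> 'd) \<Rightarrow> bool" where
  "unital_star_mono A D \<pi> \<longleftrightarrow>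
     (\<forall>a b. \<pi> (a + b) = \<pi> a + \<pi> b) \<and> (\<forall>c a. \<pi> (csmul A c a) = csmul D c (\<pi> a)) \<and>
     (\<forall>a b. \<pi> (a * b) = \<pi> a * \<pi> b) \<and> (\<forall>a. \<pi> (cst A a) = cst D (\<pi> a)) \<and>
     \<pi> 1 = 1 \<and> inj \<pi>"

definition admissible_F :: "(real \<Rightarrow> real \<Rightarrow> real \<Rightarrow> real \<Rightarrow> real) \<Rightarrow> bool" where
  "admissible_F F \<longleftrightarrow>
     (\<forall>x1 x2 x3 x4. x1 \<ge> 0 \<and> x2 \<ge> 0 \<and> x3 \<ge> 0 \<and> x4 \<ge> 0 \<longrightarrow>
        0 \<le> F x1 x2 x3 x4 \<and> x1 * x3 + x2 * x4 \<le> F x1 x2 x3 x4 \<and>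
        (\<forall>y1 y2 y3 y4. x1 \<le> y1 \<and> x2 \<le> y2 \<and> x3 \<le> y3 \<and> x4 \<le> y4 \<longrightarrow>
            F x1 x2 x3 x4 \<le> F y1 y2 y3 y4))"

definition admissible_triple ::
  "(real \<Rightarrow> real \<Rightarrow> real \<Rightarrow> real \<Rightarrow> real) \<Rightarrow> (real \<Rightarrow> real \<Rightarrow> real \<Rightarrow> real) \<Rightarrow> (real \<Rightarrow> real \<Rightarrow> real) \<Rightarrow> bool" where
  "admissible_triple F G H \<longleftrightarrow> admissible_F F \<and>
     (\<forall>x y z. x \<ge> 0 \<and> y \<ge> 0 \<and> z \<ge> 0 \<longrightarrow>
        0 \<le> G x y z \<and> (x + y) * z \<le> G x y z \<and>
        (\<forall>x' y' z'. x \<le> x' \<and> y \<le> y' \<and> z \<le> z' \<longrightarrow> G x y z \<le> G x' y' z')) \<and>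
     (\<forall>x y. x \<ge> 0 \<and> y \<ge> 0 \<longrightarrow>
        0 \<le> H x y \<and> 2 * x * y \<le> H x y \<and>
        (\<forall>x' y'. x \<le> x' \<and> y \<le> y' \<longrightarrow> H x y \<le> H x' y'))"

text \<open>A seminorm L "extended by infinity" is represented by its domain domL and its
(finite) values on domL; "L(a) \<le> r" means a \<in> domL and L a \<le> r.\<close>

definition mk :: "'a cstar_data \<Rightarrow> 'a set \<Rightarrow> ('a \<Rightarrow> real) \<Rightarrow> ('a \<Rightarrow> complex) \<Rightarrow> ('a \<Rightarrow> complex) \<Rightarrow> ereal" where
  "mk A domL L \<phi> \<psi> = (SUP a \<in> {a \<in> sa A. a \<in> domL \<and> L a \<le> 1}. ereal (cmod (\<phi> a - \<psi> a)))"

definition qlqcms :: "('a::{real_normed_algebra_1,banach}) cstar_data \<Rightarrow> 'a set \<Rightarrow> ('a \<Rightarrow> real)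
     \<Rightarrow> (real \<Rightarrow> real \<Rightarrow> real \<Rightarrow> real \<Rightarrow> real) \<Rightarrow> bool" where
  "qlqcms A domL L F \<longleftrightarrow>
     unital_cstar A \<and>
     \<comment> \<open>dom(L) is a dense real subspace of sa(A)\<close>
     domL \<subseteq> sa A \<and> 0 \<in> domL \<and> (\<forall>a\<in>domL. \<forall>b\<in>domL. a + b \<in> domL) \<and>
     (\<forall>r. \<forall>a\<in>domL. r *\<^sub>R a \<in> domL) \<and> sa A \<subseteq> closure domL \<and>
     \<comment> \<open>L is a seminorm on dom(L)\<close>
     (\<forall>a\<in>domL. \<forall>b\<in>domL. L (a + b) \<le> L a + L b) \<and>
     (\<forall>r. \<forall>a\<in>domL. L (r *\<^sub>R a) = \<bar>r\<bar> * L a) \<and>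
     \<comment> \<open>closed under Jordan and Lie products\<close>
     (\<forall>a\<in>domL. \<forall>b\<in>domL. jordan a b \<in> domL \<and> lie A a b \<in> domL) \<and>
     \<comment> \<open>(i)\<close>
     {a \<in> domL. L a = 0} = range (\<lambda>r. r *\<^sub>R (1::'a)) \<and>
     \<comment> \<open>(ii) mk metrizes the weak* topology (pointwise convergence) on the state space\<close>
     (\<forall>\<phi>\<in>states A. \<forall>\<psi>\<in>states A. mk A domL L \<phi> \<psi> \<noteq> \<infinity>) \<and>
     Metric_space (states A) (\<lambda>\<phi> \<psi>. real_of_ereal (mk A domL L \<phi> \<psi>)) \<and>
     Metric_space.mtopology (states A) (\<lambda>\<phi> \<psi>. real_of_ereal (mk A domL L \<phi> \<psi>))
        = subtopology euclidean (states A) \<and>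
     \<comment> \<open>(iii)\<close>
     closed {a \<in> domL. L a \<le> 1} \<and>
     \<comment> \<open>(iv)\<close>
     (\<forall>a\<in>domL. \<forall>b\<in>domL.
        max (L (jordan a b)) (L (lie A a b)) \<le> F (norm a) (norm b) (L a) (L b))"

text \<open>A left Hilbert module is modelled on a type 'm which is a real Banach space whose
norm is required to be the norm induced by the inner product.\<close>

record ('a, 'm) hmod_data =
  msmul :: "complex \<Rightarrow> 'm \<Rightarrow> 'm"
  act :: "'a \<Rightarrow> 'm \<Rightarrow> 'm"
  inner :: "'m \<Rightarrow> 'm \<Rightarrow> 'a"

definition left_hilbert_module ::
  "('a::{real_normed_algebra_1,banach}) cstar_data \<Rightarrow> ('a, 'm::{real_normed_vector,banach}) hmod_data \<Rightarrow> bool" where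
  "left_hilbert_module A M \<longleftrightarrow>
     \<comment> \<open>complex vector space\<close>
     (\<forall>r \<omega>. msmul M (complex_of_real r) \<omega> = r *\<^sub>R \<omega>) \<and>
     (\<forall>c d \<omega>. msmul M (c * d) \<omega> = msmul M c (msmul M d \<omega>)) \<and>
     (\<forall>c d \<omega>. msmul M (c + d) \<omega> = msmul M c \<omega> + msmul M d \<omega>) \<and>
     (\<forall>c \<omega> \<eta>. msmul M c (\<omega> + \<eta>) = msmul M c \<omega> + msmul M c \<eta>) \<and>
     \<comment> \<open>left A-module\<close>
     (\<forall>a b \<omega>. act M (a + b) \<omega> = act M a \<omega> + act M b \<omega>) \<and>
     (\<forall>a \<omega> \<eta>. act M a (\<omega> + \<eta>) = act M a \<omega> + act M a \<eta>) \<and>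
     (\<forall>a b \<omega>. act M (a * b) \<omega> = act M a (act M b \<omega>)) \<and>
     (\<forall>\<omega>. act M 1 \<omega> = \<omega>) \<and>
     (\<forall>c a \<omega>. act M (csmul A c a) \<omega> = msmul M c (act M a \<omega>) \<and>
              act M a (msmul M c \<omega>) = msmul M c (act M a \<omega>)) \<and>
     \<comment> \<open>inner product\<close>
     (\<forall>\<omega> \<omega>' \<eta>. inner M (\<omega> + \<omega>') \<eta> = inner M \<omega> \<eta> + inner M \<omega>' \<eta>) \<and>
     (\<forall>c \<omega> \<eta>. inner M (msmul M c \<omega>) \<eta> = csmul A c (inner M \<omega> \<eta>)) \<and>
     (\<forall>\<omega> \<eta> \<eta>'. inner M \<omega> (\<eta> + \<eta>') = inner M \<omega> \<eta> + inner M \<omega> \<eta>') \<and>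
     (\<forall>c \<omega> \<eta>. inner M \<omega> (msmul M c \<eta>) = csmul A (cnj c) (inner M \<omega> \<eta>)) \<and>
     (\<forall>a \<omega> \<eta>. inner M (act M a \<omega>) \<eta> = a * inner M \<omega> \<eta>) \<and>
     (\<forall>\<omega> \<eta>. cst A (inner M \<omega> \<eta>) = inner M \<eta> \<omega>) \<and>
     (\<forall>\<omega>. positive A (inner M \<omega> \<omega>)) \<and>
     (\<forall>\<omega>. inner M \<omega> \<omega> = 0 \<longrightarrow> \<omega> = 0) \<and>
     \<comment> \<open>the norm of 'm is the Hilbert module norm (completeness: class banach)\<close>
     (\<forall>\<omega>. norm \<omega> = sqrt (norm (inner M \<omega> \<omega>)))"

definition Dball :: "'m set \<Rightarrow> ('m \<Rightarrow> real) \<Rightarrow> real \<Rightarrow> 'm set" where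
  "Dball domD D r = {\<omega> \<in> domD. D \<omega> \<le> r}"

definition mqvb ::
  "('a::{real_normed_algebra_1,banach}) cstar_data \<Rightarrow> 'a set \<Rightarrow> ('a \<Rightarrow> real) \<Rightarrow>
   ('a, 'm::{real_normed_vector,banach}) hmod_data \<Rightarrow> 'm set \<Rightarrow> ('m \<Rightarrow> real) \<Rightarrow>
   (real \<Rightarrow> real \<Rightarrow> real \<Rightarrow> real \<Rightarrow> real) \<Rightarrow> (real \<Rightarrow> real \<Rightarrow> real \<Rightarrow> real) \<Rightarrow> (real \<Rightarrow> real \<Rightarrow> real) \<Rightarrow> bool" where
  "mqvb A domL L M domD D F G H \<longleftrightarrow>
     qlqcms A domL L F \<and> left_hilbert_module A M \<and>
     \<comment> \<open>D is a norm on a dense complex subspace dom(D)\<close>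
     0 \<in> domD \<and> (\<forall>\<omega>\<in>domD. \<forall>\<eta>\<in>domD. \<omega> + \<eta> \<in> domD) \<and>
     (\<forall>c. \<forall>\<omega>\<in>domD. msmul M c \<omega> \<in> domD) \<and> closure domD = UNIV \<and>
     (\<forall>\<omega>\<in>domD. \<forall>\<eta>\<in>domD. D (\<omega> + \<eta>) \<le> D \<omega> + D \<eta>) \<and>
     (\<forall>c. \<forall>\<omega>\<in>domD. D (msmul M c \<omega>) = cmod c * D \<omega>) \<and>
     (\<forall>\<omega>\<in>domD. D \<omega> = 0 \<longrightarrow> \<omega> = 0) \<and>
     \<comment> \<open>(1)\<close>
     (\<forall>\<omega>\<in>domD. norm \<omega> \<le> D \<omega>) \<and>
     \<comment> \<open>(2)\<close>
     compact (Dball domD D 1) \<and>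
     \<comment> \<open>(3)\<close>
     (\<forall>a \<in> sa A \<inter> domL. \<forall>\<omega>\<in>domD.
        act M a \<omega> \<in> domD \<and> D (act M a \<omega>) \<le> G (norm a) (L a) (D \<omega>)) \<and>
     \<comment> \<open>(4)\<close>
     (\<forall>\<omega>\<in>domD. \<forall>\<eta>\<in>domD.
        ReC A (inner M \<omega> \<eta>) \<in> domL \<and> ImC A (inner M \<omega> \<eta>) \<in> domL \<and>
        max (L (ReC A (inner M \<omega> \<eta>))) (L (ImC A (inner M \<omega> \<eta>))) \<le> H (D \<omega>) (D \<eta>))"

definition kmod :: "('a::real_normed_vector, 'm) hmod_data \<Rightarrow> 'm set \<Rightarrow> ('m \<Rightarrow> real) \<Rightarrow> 'm \<Rightarrow> 'm \<Rightarrow> ereal" where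
  "kmod M domD D \<omega> \<eta> =
     (SUP \<xi> \<in> Dball domD D 1. ereal (norm (inner M \<omega> \<xi> - inner M \<eta> \<xi>)))"

definition Haus :: "('x \<Rightarrow> 'x \<Rightarrow> ereal) \<Rightarrow> 'x set \<Rightarrow> 'x set \<Rightarrow> ereal" where
  "Haus d X Y = max (SUP a\<in>X. INF b\<in>Y. d a b) (SUP b\<in>Y. INF a\<in>X. d a b)"

definition level1 :: "('d::ring_1) cstar_data \<Rightarrow> 'd \<Rightarrow> ('d \<Rightarrow> complex) set" where
  "level1 D x = {\<phi> \<in> states D. \<phi> (cst D (1 - x) * (1 - x)) = 0 \<and> \<phi> ((1 - x) * cst D (1 - x)) = 0}"

definition modular_bridge ::
  "('a::{real_normed_algebra_1,banach}) cstar_data \<Rightarrow> ('a, 'm::{real_normed_vector,banach}) hmod_data \<Rightarrow> 'm set \<Rightarrow> ('m \<Rightarrow> real) \<Rightarrow>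
   ('b::{real_normed_algebra_1,banach}) cstar_data \<Rightarrow> ('b, 'n::{real_normed_vector,banach}) hmod_data \<Rightarrow> 'n set \<Rightarrow> ('n \<Rightarrow> real) \<Rightarrow>
   ('d::{real_normed_algebra_1,banach}) cstar_data \<Rightarrow> 'd \<Rightarrow> ('a \<Rightarrow> 'd) \<Rightarrow> ('b \<Rightarrow> 'd) \<Rightarrow>
   'j set \<Rightarrow> ('j \<Rightarrow> 'm) \<Rightarrow> ('j \<Rightarrow> 'n) \<Rightarrow> bool" where
  "modular_bridge A M domDM DM B N domDN DN Dd x \<pi>A \<pi>B J \<omega>s \<eta>s \<longleftrightarrow>
     unital_cstar Dd \<and> norm x = 1 \<and> level1 Dd x \<noteq> {} \<and>
     unital_star_mono A Dd \<pi>A \<and> unital_star_mono B Dd \<pi>B \<and>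
     J \<noteq> {} \<and> (\<forall>j\<in>J. \<omega>s j \<in> Dball domDM DM 1 \<and> \<eta>s j \<in> Dball domDN DN 1)"

definition bn :: "('a \<Rightarrow> 'd::real_normed_algebra) \<Rightarrow> ('b \<Rightarrow> 'd) \<Rightarrow> 'd \<Rightarrow> 'a \<Rightarrow> 'b \<Rightarrow> real" where
  "bn \<pi>A \<pi>B x a b = norm (\<pi>A a * x - x * \<pi>B b)"

definition dn :: "('a \<Rightarrow> 'd::real_normed_algebra) \<Rightarrow> ('b \<Rightarrow> 'd) \<Rightarrow> 'd \<Rightarrow> ('a, 'm) hmod_data \<Rightarrow> ('b, 'n) hmod_data \<Rightarrow>
     'j set \<Rightarrow> ('j \<Rightarrow> 'm) \<Rightarrow> ('j \<Rightarrow> 'n) \<Rightarrow> 'm \<Rightarrow> 'n \<Rightarrow> ereal" where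
  "dn \<pi>A \<pi>B x M N J \<omega>s \<eta>s \<omega> \<eta> =
     (SUP k\<in>J. ereal (max (bn \<pi>A \<pi>B x (inner M \<omega> (\<omega>s k)) (inner N \<eta> (\<eta>s k)))
                           (bn \<pi>A \<pi>B x (inner M (\<omega>s k) \<omega>) (inner N (\<eta>s k) \<eta>))))"

definition basic_reach ::
  "'a cstar_data \<Rightarrow> 'a set \<Rightarrow> ('a \<Rightarrow> real) \<Rightarrow> 'b cstar_data \<Rightarrow> 'b set \<Rightarrow> ('b \<Rightarrow> real) \<Rightarrow>
   ('a \<Rightarrow> 'd::real_normed_algebra) \<Rightarrow> ('b \<Rightarrow> 'd) \<Rightarrow> 'd \<Rightarrow> ereal" where
  "basic_reach A domLA LA B domLB LB \<pi>A \<pi>B x =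
     max (SUP a \<in> {a \<in> sa A. a \<in> domLA \<and> LA a \<le> 1}. INF b \<in> {b \<in> sa B. b \<in> domLB \<and> LB b \<le> 1}.
             ereal (bn \<pi>A \<pi>B x a b))
         (SUP b \<in> {b \<in> sa B. b \<in> domLB \<and> LB b \<le> 1}. INF a \<in> {a \<in> sa A. a \<in> domLA \<and> LA a \<le> 1}.
             ereal (bn \<pi>A \<pi>B x a b))"

definition modular_reach ::
  "('a \<Rightarrow> 'd::real_normed_algebra) \<Rightarrow> ('b \<Rightarrow> 'd) \<Rightarrow> 'd \<Rightarrow> ('a, 'm) hmod_data \<Rightarrow> ('b, 'n) hmod_data \<Rightarrow>
     'j set \<Rightarrow> ('j \<Rightarrow> 'm) \<Rightarrow> ('j \<Rightarrow> 'n) \<Rightarrow> ereal" where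
  "modular_reach \<pi>A \<pi>B x M N J \<omega>s \<eta>s = (SUP j\<in>J. dn \<pi>A \<pi>B x M N J \<omega>s \<eta>s (\<omega>s j) (\<eta>s j))"

definition imprint ::
  "('a::real_normed_vector, 'm) hmod_data \<Rightarrow> 'm set \<Rightarrow> ('m \<Rightarrow> real) \<Rightarrow>
   ('b::real_normed_vector, 'n) hmod_data \<Rightarrow> 'n set \<Rightarrow> ('n \<Rightarrow> real) \<Rightarrow>
   'j set \<Rightarrow> ('j \<Rightarrow> 'm) \<Rightarrow> ('j \<Rightarrow> 'n) \<Rightarrow> ereal" where
  "imprint M domDM DM N domDN DN J \<omega>s \<eta>s =
     max (Haus (kmod M domDM DM) (\<omega>s ` J) (Dball domDM DM 1))
         (Haus (kmod N domDN DN) (\<eta>s ` J) (Dball domDN DN 1))"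

definition reach ::
  "('a::real_normed_vector) cstar_data \<Rightarrow> 'a set \<Rightarrow> ('a \<Rightarrow> real) \<Rightarrow> ('a, 'm) hmod_data \<Rightarrow> 'm set \<Rightarrow> ('m \<Rightarrow> real) \<Rightarrow>
   ('b::real_normed_vector) cstar_data \<Rightarrow> 'b set \<Rightarrow> ('b \<Rightarrow> real) \<Rightarrow> ('b, 'n) hmod_data \<Rightarrow> 'n set \<Rightarrow> ('n \<Rightarrow> real) \<Rightarrow>
   ('a \<Rightarrow> 'd::real_normed_algebra) \<Rightarrow> ('b \<Rightarrow> 'd) \<Rightarrow> 'd \<Rightarrow> 'j set \<Rightarrow> ('j \<Rightarrow> 'm) \<Rightarrow> ('j \<Rightarrow> 'n) \<Rightarrow> ereal" where
  "reach A domLA LA M domDM DM B domLB LB N domDN DN \<pi>A \<pi>B x J \<omega>s \<eta>s =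
     max (basic_reach A domLA LA B domLB LB \<pi>A \<pi>B x)
         (modular_reach \<pi>A \<pi>B x M N J \<omega>s \<eta>s + imprint M domDM DM N domDN DN J \<omega>s \<eta>s)"

end

theory Submission
  imports Defs "HOL-Computational_Algebra.Formal_Power_Series"
begin


lemma cs_real: "unital_cstar A \<Longrightarrow> csmul A (complex_of_real r) a = r *\<^sub>R a"
  unfolding unital_cstar_def by (elim conjE) metis

lemma cs_mult: "unital_cstar A \<Longrightarrow> csmul A (c * d) a = csmul A c (csmul A d a)"
  unfolding unital_cstar_def by (elim conjE) metis

lemma cs_add: "unital_cstar A \<Longrightarrow> csmul A (c + d) a = csmul A c a + csmul A d a"
  unfolding unital_cstar_def by (elim conjE) metis

lemma cs_addr: "unital_cstar A \<Longrightarrow> csmul A c (a + b) = csmul A c a + csmul A c b"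
  unfolding unital_cstar_def by (elim conjE) metis

lemma cs_ml: "unital_cstar A \<Longrightarrow> csmul A c (a * b) = csmul A c a * b"
  unfolding unital_cstar_def by (elim conjE) metis

lemma cs_mr: "unital_cstar A \<Longrightarrow> csmul A c (a * b) = a * csmul A c b"
  unfolding unital_cstar_def by (elim conjE) metis

lemma cst_add: "unital_cstar A \<Longrightarrow> cst A (a + b) = cst A a + cst A b"
  unfolding unital_cstar_def by (elim conjE) metis

lemma cst_cs: "unital_cstar A \<Longrightarrow> cst A (csmul A c a) = csmul A (cnj c) (cst A a)"
  unfolding unital_cstar_def by (elim conjE) metis

lemma cst_mult: "unital_cstar A \<Longrightarrow> cst A (a * b) = cst A b * cst A a"
  unfolding unital_cstar_def by (elim conjE) metis

lemma cst_cst: "unital_cstar A \<Longrightarrow> cst A (cst A a) = a"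
  unfolding unital_cstar_def by (elim conjE) metis

lemma cst_norm: "unital_cstar A \<Longrightarrow> norm (cst A a * a) = (norm a)\<^sup>2"
  unfolding unital_cstar_def by (elim conjE) metis

lemma cst_scaleR: "unital_cstar A \<Longrightarrow> cst A (r *\<^sub>R a) = r *\<^sub>R cst A a"
proof -
  assume A: "unital_cstar A"
  have "cst A (r *\<^sub>R a) = cst A (csmul A (complex_of_real r) a)" by (simp add: cs_real[OF A])
  also have "\<dots> = csmul A (complex_of_real r) (cst A a)" by (simp add: cst_cs[OF A])
  also have "\<dots> = r *\<^sub>R cst A a" by (simp add: cs_real[OF A])
  finally show ?thesis .
qed

lemma cst_zero: "unital_cstar A \<Longrightarrow> cst A 0 = 0"
  using cst_scaleR[of A 0] by simp

lemma cst_minus: "unital_cstar A \<Longrightarrow> cst A (- a) = - cst A a"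
  using cst_scaleR[of A "-1" a] by simp

lemma cst_diff: "unital_cstar A \<Longrightarrow> cst A (a - b) = cst A a - cst A b"
  by (simp only: diff_conv_add_uminus cst_add cst_minus)

lemma cst_one: "unital_cstar A \<Longrightarrow> cst A (1::'a::{real_normed_algebra_1,banach}) = 1"
proof -
  assume A: "unital_cstar A"
  have "cst A (1::'a) = cst A 1 * 1" by simp
  also have "\<dots> = cst A 1 * cst A (cst A 1)" by (simp add: cst_cst[OF A])
  also have "\<dots> = cst A (cst A 1 * 1)" by (simp only: cst_mult[OF A])
  also have "\<dots> = 1" by (simp add: cst_cst[OF A])
  finally show ?thesis .
qed

lemma norm_cst: "unital_cstar A \<Longrightarrow> norm (cst A a) = norm a"
proof -
  assume A: "unital_cstar A"
  have le: "norm b \<le> norm (cst A b)" for b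
  proof (cases "b = 0")
    case False
    have "(norm b)\<^sup>2 \<le> norm (cst A b) * norm b"
      using cst_norm[OF A, of b] norm_mult_ineq[of "cst A b" b] by simp
    then show ?thesis using False by (simp add: power2_eq_square)
  qed simp
  show ?thesis using le[of a] le[of "cst A a"] cst_cst[OF A] by (intro antisym) auto
qed

lemma cst_bl: "unital_cstar A \<Longrightarrow> bounded_linear (cst A)"
  by (rule bounded_linear_intro[where K=1]) (simp_all add: cst_add cst_scaleR norm_cst)

lemma cst_power: "unital_cstar A \<Longrightarrow> cst A (a ^ n) = cst A a ^ n"
  by (induction n) (simp_all add: cst_one cst_mult power_commutes)

lemma cs_zero: "unital_cstar A \<Longrightarrow> csmul A 0 a = 0"
  using cs_real[of A 0 a] by simp

lemma cs_one: "unital_cstar A \<Longrightarrow> csmul A 1 a = a"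
  using cs_real[of A 1 a] by simp

lemma sm_add: "unital_star_mono A D \<pi> \<Longrightarrow> \<pi> (a + b) = \<pi> a + \<pi> b"
  unfolding unital_star_mono_def by (elim conjE) metis

lemma sm_cs: "unital_star_mono A D \<pi> \<Longrightarrow> \<pi> (csmul A c a) = csmul D c (\<pi> a)"
  unfolding unital_star_mono_def by (elim conjE) metis

lemma sm_mult: "unital_star_mono A D \<pi> \<Longrightarrow> \<pi> (a * b) = \<pi> a * \<pi> b"
  unfolding unital_star_mono_def by (elim conjE) metis

lemma sm_cst: "unital_star_mono A D \<pi> \<Longrightarrow> \<pi> (cst A a) = cst D (\<pi> a)"
  unfolding unital_star_mono_def by (elim conjE) metis

lemma sm_one: "unital_star_mono A D \<pi> \<Longrightarrow> \<pi> 1 = 1"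
  unfolding unital_star_mono_def by (elim conjE) metis

lemma sm_scaleR: "unital_cstar A \<Longrightarrow> unital_cstar D \<Longrightarrow> unital_star_mono A D \<pi> \<Longrightarrow> \<pi> (r *\<^sub>R a) = r *\<^sub>R \<pi> a"
proof -
  assume A: "unital_cstar A" and D: "unital_cstar D" and P: "unital_star_mono A D \<pi>"
  have "\<pi> (r *\<^sub>R a) = \<pi> (csmul A (complex_of_real r) a)" by (simp add: cs_real[OF A])
  also have "\<dots> = csmul D (complex_of_real r) (\<pi> a)" by (simp add: sm_cs[OF P])
  also have "\<dots> = r *\<^sub>R \<pi> a" by (simp add: cs_real[OF D])
  finally show ?thesis .
qed

lemma sm_diff: "unital_cstar A \<Longrightarrow> unital_cstar D \<Longrightarrow> unital_star_mono A D \<pi> \<Longrightarrow> \<pi> (a - b) = \<pi> a - \<pi> b"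
proof -
  assume P: "unital_star_mono A D \<pi>"
  have "\<pi> a = \<pi> ((a - b) + b)" by simp
  also have "\<dots> = \<pi> (a - b) + \<pi> b" by (rule sm_add[OF P])
  finally show ?thesis by simp
qed

definition cc :: "nat \<Rightarrow> real" where "cc n = ((1/2) gchoose n) * (-1)^n"

lemma gch_rec: "of_nat (Suc k) * ((a::real) gchoose Suc k) = (a gchoose k) * (a - of_nat k)"
proof -
  have "fact (Suc k) * (a gchoose Suc k) = (\<Prod>i = 0..<Suc k. a - of_nat i)"
    by (rule gbinomial_mult_fact)
  also have "\<dots> = (\<Prod>i = 0..<k. a - of_nat i) * (a - of_nat k)" by simp
  also have "\<dots> = fact k * (a gchoose k) * (a - of_nat k)" by (simp add: gbinomial_mult_fact)
  finally have "fact k * (of_nat (Suc k) * (a gchoose Suc k)) = fact k * ((a gchoose k) * (a - of_nat k))"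
    by (simp add: algebra_simps)
  then show ?thesis by (simp del: of_nat_Suc)
qed

lemma cc_bound: "\<bar>cc n\<bar> \<le> 1"
proof (induction n)
  case 0 then show ?case by (simp add: cc_def)
next
  case (Suc k)
  have e: "\<bar>cc (Suc k)\<bar> * (real k + 1) = \<bar>cc k\<bar> * \<bar>1/2 - k\<bar>"
  proof -
    have "\<bar>cc (Suc k)\<bar> * (real k + 1) = \<bar>of_nat (Suc k) * ((1/2::real) gchoose Suc k)\<bar>"
      by (simp add: cc_def abs_mult)
    also have "\<dots> = \<bar>((1/2::real) gchoose k) * (1/2 - of_nat k)\<bar>" by (simp only: gch_rec)
    also have "\<dots> = \<bar>cc k\<bar> * \<bar>1/2 - k\<bar>" by (simp add: cc_def abs_mult)
    finally show ?thesis .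
  qed
  have "\<bar>1/2 - real k\<bar> \<le> real k + 1" by auto
  then have "\<bar>cc k\<bar> * \<bar>1/2 - k\<bar> \<le> 1 * (real k+1)" using Suc
    by (intro mult_mono) auto
  then have "\<bar>cc (Suc k)\<bar> * (real k + 1) \<le> 1 * (real k + 1)" by (simp only: e)
  then show ?case by (rule mult_right_le_imp_le) simp
qed

lemma cc_conv: "(\<Sum>i\<le>n. cc i * cc (n - i)) = (if n = 0 then 1 else if n = 1 then -1 else 0)"
proof -
  have "(\<Sum>i\<le>n. cc i * cc (n - i)) = (\<Sum>i\<in>{0..n}. ((1/2::real) gchoose i) * ((1/2) gchoose (n - i))) * (-1)^n"
    unfolding sum_distrib_right cc_def atMost_atLeast0
  proof (rule sum.cong)
    fix i assume "i \<in> {0..n}"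
    then have "(-1::real)^i * (-1)^(n-i) = (-1)^n" by (simp add: power_add[symmetric])
    then show "(1/2 gchoose i) * (-1::real)^i * ((1/2 gchoose (n - i)) * (-1)^(n-i)) = (1/2 gchoose i) * (1/2 gchoose (n - i)) * (-1)^n"
      by (metis mult.assoc mult.left_commute)
  qed simp
  also have "\<dots> = ((1::real) gchoose n) * (-1)^n"
    by (subst gbinomial_Vandermonde) simp
  also have "(1::real) gchoose n = of_nat (1 choose n)"
    using binomial_gbinomial[of 1 n, symmetric] by (simp only: of_nat_1)
  finally show ?thesis by (cases n) (auto simp: binomial_eq_0)
qed

lemma sqrt_exists:
  fixes h :: "'a::{real_normed_algebra_1,banach}"
  assumes A: "unital_cstar A" and sa: "cst A h = h" and nh: "norm h < 1"
  shows "\<exists>s. s * s = 1 - h * h \<and> cst A s = s \<and> h * s = s * h"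
proof -
  define k where "k = h * h"
  define a where "a n = cc n *\<^sub>R k ^ n" for n
  define s where "s = suminf a"
  have nk: "norm k < 1" unfolding k_def
  proof -
    have "norm h * norm h \<le> norm h" by (rule mult_left_le) (use nh in auto)
    then show "norm (h * h) < 1" using norm_mult_ineq[of h h] nh by linarith
  qed
  have bnd: "norm (norm (a n)) \<le> norm k ^ n" for n
  proof -
    have "norm (a n) = \<bar>cc n\<bar> * norm (k ^ n)" by (simp add: a_def)
    also have "\<dots> \<le> 1 * norm k ^ n"
      by (intro mult_mono cc_bound norm_power_ineq) auto
    finally show ?thesis by simp
  qed
  have sn: "summable (\<lambda>n. norm (a n))"
    by (rule summable_comparison_test[OF _ summable_geometric[of "norm k"]])
       (use bnd nk in auto)
  have sa': "summable a" using sn summable_norm_cancel by blast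
  have cp: "(\<lambda>n. \<Sum>i\<le>n. a i * a (n - i)) sums (s * s)"
    unfolding s_def by (rule Cauchy_product_sums[OF sn sn])
  have eq1: "(\<lambda>n. \<Sum>i\<le>n. a i * a (n - i)) = (\<lambda>n. (if n = 0 then 1 else if n = 1 then - k else 0))"
  proof
    fix n
    have "(\<Sum>i\<le>n. a i * a (n - i)) = (\<Sum>i\<le>n. (cc i * cc (n - i)) *\<^sub>R k ^ n)"
    proof (rule sum.cong)
    fix i assume "i \<in> {..n}"
    then have "k ^ i * k ^ (n - i) = k ^ n" by (simp add: power_add[symmetric])
    then show "a i * a (n - i) = (cc i * cc (n - i)) *\<^sub>R k ^ n" by (simp add: a_def)
  qed simp
    also have "\<dots> = (\<Sum>i\<le>n. cc i * cc (n - i)) *\<^sub>R k ^ n" by (simp add: scaleR_sum_left)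
    finally show "(\<Sum>i\<le>n. a i * a (n - i)) = (if n = 0 then 1 else if n = 1 then - k else 0)"
      by (simp add: cc_conv)
  qed
  have fs: "(\<lambda>n. (if n = 0 then 1 else if n = 1 then - k else 0)) sums (1 - k)"
  proof -
    have "(\<lambda>n. (if n = 0 then 1 else if n = 1 then - k else 0)) sums (\<Sum>n\<in>{0::nat,1}. (if n = 0 then 1 else if n = 1 then - k else 0))"
      by (rule sums_finite[of "{0,1}"]) auto
    then show ?thesis by simp
  qed
  have ss: "s * s = 1 - k" using cp fs unfolding eq1 by (rule sums_unique2)
  have ck: "cst A k = k" unfolding k_def using sa by (simp add: cst_mult[OF A])
  have c1: "(\<lambda>n. cst A (a n)) sums cst A s"
    unfolding s_def by (rule bounded_linear.sums[OF cst_bl[OF A]]) (use sa' in \<open>simp add: summable_sums\<close>)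
  have c2: "(\<lambda>n. cst A (a n)) = a"
    by (auto simp: a_def cst_scaleR[OF A] cst_power[OF A] ck)
  have cs: "cst A s = s" using c1 summable_sums[OF sa'] unfolding c2 s_def by (rule sums_unique2)
  have "h * s = (\<Sum>n. h * a n)" unfolding s_def by (rule suminf_mult[OF sa', symmetric])
  also have "\<dots> = (\<Sum>n. a n * h)"
  proof -
    have "h * k = k * h" unfolding k_def by (simp add: mult.assoc)
    then have "h * k ^ n = k ^ n * h" for n using power_commuting_commutes[of k h n] by simp
    then show ?thesis by (simp add: a_def)
  qed
  also have "\<dots> = s * h" unfolding s_def by (rule suminf_mult2[OF sa', symmetric])
  finally have "h * s = s * h" .
  then show ?thesis using ss cs unfolding k_def by blast
qed

lemma contr_sa1:
  fixes h :: "'a::{real_normed_algebra_1,banach}" and \<pi> :: "'a \<Rightarrow> 'd::{real_normed_algebra_1,banach}"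
  assumes A: "unital_cstar A" and D: "unital_cstar D" and P: "unital_star_mono A D \<pi>"
    and sa: "cst A h = h" and nh: "norm h < 1"
  shows "norm (\<pi> h) \<le> 1"
proof -
  obtain s where ss: "s * s = 1 - h * h" and cs: "cst A s = s" and hs: "h * s = s * h"
    using sqrt_exists[OF A sa nh] by blast
  define w where "w = h + csmul A \<i> s"
  have cw: "cst A w = h + csmul A (- \<i>) s"
    by (simp add: w_def cst_add[OF A] cst_cs[OF A] sa cs)
  define u where "u = csmul A \<i> s"
  define v where "v = csmul A (- \<i>) s"
  have "cst A w * w = (h + v) * (h + u)" by (subst cw) (simp only: u_def v_def w_def)
  also have "\<dots> = h * h + (h * u + v * h) + v * u" by (simp only: distrib_left distrib_right add.assoc add.left_commute)
  also have "h * u + v * h = 0"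
  proof -
    have "h * u = csmul A \<i> (h * s)" unfolding u_def by (rule cs_mr[OF A, symmetric])
    moreover have "v * h = csmul A (- \<i>) (h * s)" unfolding v_def hs by (rule cs_ml[OF A, symmetric])
    ultimately have "h * u + v * h = csmul A (\<i> + - \<i>) (h * s)" by (simp only: cs_add[OF A])
    then show ?thesis by (simp add: cs_zero[OF A])
  qed
  also have "v * u = s * s"
  proof -
    have "v * u = csmul A (- \<i>) (s * u)" unfolding v_def by (rule cs_ml[OF A, symmetric])
    also have "s * u = csmul A \<i> (s * s)" unfolding u_def by (rule cs_mr[OF A, symmetric])
    also have "csmul A (- \<i>) (csmul A \<i> (s * s)) = csmul A (- \<i> * \<i>) (s * s)" by (rule cs_mult[OF A, symmetric])
    also have "- \<i> * \<i> = 1" by simp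
    finally show ?thesis by (simp add: cs_one[OF A])
  qed
  also have "h * h + 0 + s * s = 1" using ss by simp
  finally have ww: "cst A w * w = 1" .
  have "(norm (\<pi> w))\<^sup>2 = norm (cst D (\<pi> w) * \<pi> w)" by (simp add: cst_norm[OF D])
  also have "\<dots> = norm (\<pi> (cst A w * w))" by (simp add: sm_mult[OF P] sm_cst[OF P])
  also have "\<dots> = 1" by (simp add: ww sm_one[OF P])
  finally have nw: "norm (\<pi> w) = 1"
    using power2_eq_1_iff[of "norm (\<pi> w)"] norm_ge_zero[of "\<pi> w"] by auto
  have "w + cst A w = (h + h) + (csmul A \<i> s + csmul A (- \<i>) s)"
    by (subst cw) (simp only: w_def add.assoc add.left_commute)
  also have "csmul A \<i> s + csmul A (- \<i>) s = csmul A (\<i> + - \<i>) s" by (rule cs_add[OF A, symmetric])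
  also have "\<dots> = 0" by (simp add: cs_zero[OF A])
  finally have "w + cst A w = 2 *\<^sub>R h" by (simp add: scaleR_2)
  then have "\<pi> (w + cst A w) = 2 *\<^sub>R \<pi> h" by (simp add: sm_scaleR[OF A D P])
  then have e2: "2 *\<^sub>R \<pi> h = \<pi> w + cst D (\<pi> w)"
    by (simp add: sm_add[OF P] sm_cst[OF P])
  have "2 * norm (\<pi> h) = norm (2 *\<^sub>R \<pi> h)" by simp
  also have "\<dots> \<le> norm (\<pi> w) + norm (cst D (\<pi> w))" unfolding e2 by (rule norm_triangle_ineq)
  finally have "2 * norm (\<pi> h) \<le> norm (\<pi> w) + norm (cst D (\<pi> w))" .
  then show ?thesis using nw norm_cst[OF D] by simp
qed

lemma contr_sa:
  fixes h :: "'a::{real_normed_algebra_1,banach}" and \<pi> :: "'a \<Rightarrow> 'd::{real_normed_algebra_1,banach}"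
  assumes A: "unital_cstar A" and D: "unital_cstar D" and P: "unital_star_mono A D \<pi>"
    and sa: "cst A h = h"
  shows "norm (\<pi> h) \<le> norm h"
proof (rule dense_ge)
  fix t assume t: "norm h < t"
  then have tp: "t > 0" using norm_ge_zero[of h] by linarith
  have "norm (\<pi> ((1/t) *\<^sub>R h)) \<le> 1"
    using t tp by (intro contr_sa1[OF A D P]) (auto simp: cst_scaleR[OF A] sa)
  then have "norm (\<pi> h) / t \<le> 1" using tp by (simp add: sm_scaleR[OF A D P])
  then show "norm (\<pi> h) \<le> t" using tp by (simp add: field_simps)
qed

lemma contr:
  fixes a :: "'a::{real_normed_algebra_1,banach}" and \<pi> :: "'a \<Rightarrow> 'd::{real_normed_algebra_1,banach}"
  assumes A: "unital_cstar A" and D: "unital_cstar D" and P: "unital_star_mono A D \<pi>"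
  shows "norm (\<pi> a) \<le> norm a"
proof -
  have "(norm (\<pi> a))\<^sup>2 = norm (\<pi> (cst A a * a))"
    by (simp add: cst_norm[OF D] sm_mult[OF P] sm_cst[OF P])
  also have "\<dots> \<le> norm (cst A a * a)"
    by (rule contr_sa[OF A D P]) (simp add: cst_mult[OF A] cst_cst[OF A])
  also have "\<dots> = (norm a)\<^sup>2" by (rule cst_norm[OF A])
  finally show ?thesis by (rule power2_le_imp_le) simp
qed


lemma tri_A:
  fixes pA :: "'a::real_normed_vector \<Rightarrow> 'd::real_normed_algebra" and pB :: "'b \<Rightarrow> 'd"
  assumes c: "\<forall>a. norm (pA a) \<le> norm a" and d: "\<forall>a b. pA (a - b) = pA a - pA b" and x: "norm x = 1"
  shows "norm (pA a * x - x * pB b) \<le> norm (a - a') + norm (pA a' * x - x * pB b)"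
proof -
  have pa: "pA a = pA (a - a') + pA a'" using d by simp
  have "pA a * x - x * pB b = pA (a - a') * x + (pA a' * x - x * pB b)"
    by (subst pa) (simp add: algebra_simps)
  then have "norm (pA a * x - x * pB b) \<le> norm (pA (a - a') * x) + norm (pA a' * x - x * pB b)"
    by (metis norm_triangle_ineq)
  moreover have "norm (pA (a - a') * x) \<le> norm (a - a')"
    using norm_mult_ineq[of "pA (a - a')" x] x c by simp (metis order_trans)
  ultimately show ?thesis by linarith
qed

lemma tri_B:
  fixes pA :: "'a \<Rightarrow> 'd::real_normed_algebra" and pB :: "'b::real_normed_vector \<Rightarrow> 'd"
  assumes c: "\<forall>a. norm (pB a) \<le> norm a" and d: "\<forall>a b. pB (a - b) = pB a - pB b" and x: "norm x = 1"
  shows "norm (pA a * x - x * pB b) \<le> norm (b - b') + norm (pA a * x - x * pB b')"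
proof -
  have pb: "pB b = pB (b - b') + pB b'" using d by simp
  have "pA a * x - x * pB b = (pA a * x - x * pB b') - x * pB (b - b')"
    by (subst pb) (simp add: algebra_simps)
  then have "norm (pA a * x - x * pB b) \<le> norm (pA a * x - x * pB b') + norm (x * pB (b - b'))"
    by (metis norm_triangle_ineq4)
  moreover have "norm (x * pB (b - b')) \<le> norm (b - b')"
    using norm_mult_ineq[of x "pB (b - b')"] x c by simp (metis order_trans)
  ultimately show ?thesis by linarith
qed

lemma ereal_step:
  fixes p q p' q' n :: real and K R :: ereal
  assumes "p \<le> n + p'" "q \<le> n + q'" "ereal n \<le> K" "ereal (max p' q') \<le> R"
  shows "ereal (max p q) \<le> R + K"
proof -
  have "max p q \<le> n + max p' q'" using assms(1,2) by (auto simp: max_def)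
  then have "ereal (max p q) \<le> ereal (n + max p' q')" by (simp only: ereal_less_eq)
  also have "\<dots> = ereal n + ereal (max p' q')" by (simp only: plus_ereal.simps)
  also have "\<dots> \<le> K + R" by (rule add_mono) (use assms in auto)
  finally show ?thesis by (simp add: add.commute)
qed



theorem mainTheorem4:
  fixes F :: "real \<Rightarrow> real \<Rightarrow> real \<Rightarrow> real \<Rightarrow> real"
    and G :: "real \<Rightarrow> real \<Rightarrow> real \<Rightarrow> real"
    and H :: "real \<Rightarrow> real \<Rightarrow> real"
    and A :: "('a::{real_normed_algebra_1,banach}) cstar_data" and domLA :: "'a set" and LA :: "'a \<Rightarrow> real"
    and M :: "('a, 'm::{real_normed_vector,banach}) hmod_data" and domDM :: "'m set" and DM :: "'m \<Rightarrow> real"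
    and B :: "('b::{real_normed_algebra_1,banach}) cstar_data" and domLB :: "'b set" and LB :: "'b \<Rightarrow> real"
    and N :: "('b, 'n::{real_normed_vector,banach}) hmod_data" and domDN :: "'n set" and DN :: "'n \<Rightarrow> real"
    and Dd :: "('d::{real_normed_algebra_1,banach}) cstar_data" and x :: 'd
    and \<pi>A :: "'a \<Rightarrow> 'd" and \<pi>B :: "'b \<Rightarrow> 'd"
    and J :: "'j set" and \<omega>s :: "'j \<Rightarrow> 'm" and \<eta>s :: "'j \<Rightarrow> 'n"
  assumes adm: "admissible_triple F G H"
    and bundleA: "mqvb A domLA LA M domDM DM F G H"
    and bundleB: "mqvb B domLB LB N domDN DN F G H"
    and bridge: "modular_bridge A M domDM DM B N domDN DN Dd x \<pi>A \<pi>B J \<omega>s \<eta>s"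
  shows
    "(\<forall>\<omega> \<in> Dball domDM DM 1. \<forall>j\<in>J.
        kmod M domDM DM \<omega> (\<omega>s j) \<le> imprint M domDM DM N domDN DN J \<omega>s \<eta>s \<longrightarrow>
        dn \<pi>A \<pi>B x M N J \<omega>s \<eta>s \<omega> (\<eta>s j)
          \<le> reach A domLA LA M domDM DM B domLB LB N domDN DN \<pi>A \<pi>B x J \<omega>s \<eta>s)
   \<and> (\<forall>\<eta> \<in> Dball domDN DN 1. \<forall>j\<in>J.
        kmod N domDN DN \<eta> (\<eta>s j) \<le> imprint M domDM DM N domDN DN J \<omega>s \<eta>s \<longrightarrow>
        dn \<pi>A \<pi>B x M N J \<omega>s \<eta>s (\<omega>s j) \<eta>
          \<le> reach A domLA LA M domDM DM B domLB LB N domDN DN \<pi>A \<pi>B x J \<omega>s \<eta>s)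
   \<and> max (max (SUP a \<in> {a \<in> sa A. a \<in> domLA \<and> LA a \<le> 1}. INF b \<in> {b \<in> sa B. b \<in> domLB \<and> LB b \<le> 1}.
                    ereal (bn \<pi>A \<pi>B x a b))
               (SUP b \<in> {b \<in> sa B. b \<in> domLB \<and> LB b \<le> 1}. INF a \<in> {a \<in> sa A. a \<in> domLA \<and> LA a \<le> 1}.
                    ereal (bn \<pi>A \<pi>B x a b)))
          (max (SUP \<omega> \<in> Dball domDM DM 1. INF \<eta> \<in> Dball domDN DN 1. dn \<pi>A \<pi>B x M N J \<omega>s \<eta>s \<omega> \<eta>)
               (SUP \<eta> \<in> Dball domDN DN 1. INF \<omega> \<in> Dball domDM DM 1. dn \<pi>A \<pi>B x M N J \<omega>s \<eta>s \<omega> \<eta>))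
       \<le> reach A domLA LA M domDM DM B domLB LB N domDN DN \<pi>A \<pi>B x J \<omega>s \<eta>s"
proof -
  have A: "unital_cstar A" and LM: "left_hilbert_module A M"
    using bundleA unfolding mqvb_def qlqcms_def by auto
  have B: "unital_cstar B" and LN: "left_hilbert_module B N"
    using bundleB unfolding mqvb_def qlqcms_def by auto
  have Dd: "unital_cstar Dd" and nx: "norm x = 1" and PA: "unital_star_mono A Dd \<pi>A"
    and PB: "unital_star_mono B Dd \<pi>B" and Jne: "J \<noteq> {}"
    and anc: "\<And>j. j \<in> J \<Longrightarrow> \<omega>s j \<in> Dball domDM DM 1 \<and> \<eta>s j \<in> Dball domDN DN 1"
    using bridge unfolding modular_bridge_def by auto
  have symM: "cst A (inner M \<omega> \<eta>) = inner M \<eta> \<omega>" for \<omega> \<eta>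
    using LM unfolding left_hilbert_module_def by (elim conjE) metis
  have symN: "cst B (inner N \<omega> \<eta>) = inner N \<eta> \<omega>" for \<omega> \<eta>
    using LN unfolding left_hilbert_module_def by (elim conjE) metis
  have cA: "\<forall>a. norm (\<pi>A a) \<le> norm a" using contr[OF A Dd PA] by blast
  have cB: "\<forall>a. norm (\<pi>B a) \<le> norm a" using contr[OF B Dd PB] by blast
  have dA: "\<forall>a b. \<pi>A (a - b) = \<pi>A a - \<pi>A b" using sm_diff[OF A Dd PA] by blast
  have dB: "\<forall>a b. \<pi>B (a - b) = \<pi>B a - \<pi>B b" using sm_diff[OF B Dd PB] by blast
  define mr where "mr = modular_reach \<pi>A \<pi>B x M N J \<omega>s \<eta>s"
  define im where "im = imprint M domDM DM N domDN DN J \<omega>s \<eta>s"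
  define rc where "rc = reach A domLA LA M domDM DM B domLB LB N domDN DN \<pi>A \<pi>B x J \<omega>s \<eta>s"
  have rc1: "mr + im \<le> rc" unfolding mr_def im_def rc_def reach_def by simp
  have rc0: "basic_reach A domLA LA B domLB LB \<pi>A \<pi>B x \<le> rc" unfolding rc_def reach_def by simp
  have dnj: "ereal (max (bn \<pi>A \<pi>B x (inner M (\<omega>s j) (\<omega>s k)) (inner N (\<eta>s j) (\<eta>s k)))
                   (bn \<pi>A \<pi>B x (inner M (\<omega>s k) (\<omega>s j)) (inner N (\<eta>s k) (\<eta>s j)))) \<le> mr"
    if "j \<in> J" "k \<in> J" for j k
  proof -
    have "ereal (max (bn \<pi>A \<pi>B x (inner M (\<omega>s j) (\<omega>s k)) (inner N (\<eta>s j) (\<eta>s k)))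
                   (bn \<pi>A \<pi>B x (inner M (\<omega>s k) (\<omega>s j)) (inner N (\<eta>s k) (\<eta>s j))))
          \<le> dn \<pi>A \<pi>B x M N J \<omega>s \<eta>s (\<omega>s j) (\<eta>s j)"
      unfolding dn_def using that by (intro SUP_upper2[OF \<open>k \<in> J\<close>]) simp
    also have "\<dots> \<le> mr" unfolding mr_def modular_reach_def using that by (intro SUP_upper) simp
    finally show ?thesis .
  qed
  have coreA: "dn \<pi>A \<pi>B x M N J \<omega>s \<eta>s \<omega> (\<eta>s j) \<le> mr + kmod M domDM DM \<omega> (\<omega>s j)" if j: "j \<in> J" for \<omega> j
    unfolding dn_def
  proof (rule SUP_least)
    fix k assume k: "k \<in> J"
    define c where "c = inner M \<omega> (\<omega>s k) - inner M (\<omega>s j) (\<omega>s k)"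
    have 1: "bn \<pi>A \<pi>B x (inner M \<omega> (\<omega>s k)) (inner N (\<eta>s j) (\<eta>s k))
        \<le> norm c + bn \<pi>A \<pi>B x (inner M (\<omega>s j) (\<omega>s k)) (inner N (\<eta>s j) (\<eta>s k))"
      unfolding bn_def c_def by (rule tri_A[OF cA dA nx])
    have "inner M (\<omega>s k) \<omega> - inner M (\<omega>s k) (\<omega>s j) = cst A c"
      unfolding c_def by (simp add: cst_diff[OF A] symM)
    then have nc: "norm (inner M (\<omega>s k) \<omega> - inner M (\<omega>s k) (\<omega>s j)) = norm c" by (simp add: norm_cst[OF A])
    have 2: "bn \<pi>A \<pi>B x (inner M (\<omega>s k) \<omega>) (inner N (\<eta>s k) (\<eta>s j))
        \<le> norm c + bn \<pi>A \<pi>B x (inner M (\<omega>s k) (\<omega>s j)) (inner N (\<eta>s k) (\<eta>s j))"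
      unfolding bn_def nc[symmetric] by (rule tri_A[OF cA dA nx])
    have 3: "ereal (norm c) \<le> kmod M domDM DM \<omega> (\<omega>s j)"
      unfolding kmod_def c_def using anc[OF k] by (intro SUP_upper2[of "\<omega>s k"]) auto
    show "ereal (max (bn \<pi>A \<pi>B x (inner M \<omega> (\<omega>s k)) (inner N (\<eta>s j) (\<eta>s k)))
                  (bn \<pi>A \<pi>B x (inner M (\<omega>s k) \<omega>) (inner N (\<eta>s k) (\<eta>s j))))
          \<le> mr + kmod M domDM DM \<omega> (\<omega>s j)"
      by (rule ereal_step[OF 1 2 3 dnj[OF j k]])
  qed
  have coreB: "dn \<pi>A \<pi>B x M N J \<omega>s \<eta>s (\<omega>s j) \<eta> \<le> mr + kmod N domDN DN \<eta> (\<eta>s j)" if j: "j \<in> J" for \<eta> j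
    unfolding dn_def
  proof (rule SUP_least)
    fix k assume k: "k \<in> J"
    define c where "c = inner N \<eta> (\<eta>s k) - inner N (\<eta>s j) (\<eta>s k)"
    have 1: "bn \<pi>A \<pi>B x (inner M (\<omega>s j) (\<omega>s k)) (inner N \<eta> (\<eta>s k))
        \<le> norm c + bn \<pi>A \<pi>B x (inner M (\<omega>s j) (\<omega>s k)) (inner N (\<eta>s j) (\<eta>s k))"
      unfolding bn_def c_def by (rule tri_B[OF cB dB nx])
    have "inner N (\<eta>s k) \<eta> - inner N (\<eta>s k) (\<eta>s j) = cst B c"
      unfolding c_def by (simp add: cst_diff[OF B] symN)
    then have nc: "norm (inner N (\<eta>s k) \<eta> - inner N (\<eta>s k) (\<eta>s j)) = norm c" by (simp add: norm_cst[OF B])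
    have 2: "bn \<pi>A \<pi>B x (inner M (\<omega>s k) (\<omega>s j)) (inner N (\<eta>s k) \<eta>)
        \<le> norm c + bn \<pi>A \<pi>B x (inner M (\<omega>s k) (\<omega>s j)) (inner N (\<eta>s k) (\<eta>s j))"
      unfolding bn_def nc[symmetric] by (rule tri_B[OF cB dB nx])
    have 3: "ereal (norm c) \<le> kmod N domDN DN \<eta> (\<eta>s j)"
      unfolding kmod_def c_def using anc[OF k] by (intro SUP_upper2[of "\<eta>s k"]) auto
    show "ereal (max (bn \<pi>A \<pi>B x (inner M (\<omega>s j) (\<omega>s k)) (inner N \<eta> (\<eta>s k)))
                  (bn \<pi>A \<pi>B x (inner M (\<omega>s k) (\<omega>s j)) (inner N (\<eta>s k) \<eta>)))
          \<le> mr + kmod N domDN DN \<eta> (\<eta>s j)"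
      by (rule ereal_step[OF 1 2 3 dnj[OF j k]])
  qed
  have P1: "\<forall>\<omega> \<in> Dball domDM DM 1. \<forall>j\<in>J. kmod M domDM DM \<omega> (\<omega>s j) \<le> im \<longrightarrow>
        dn \<pi>A \<pi>B x M N J \<omega>s \<eta>s \<omega> (\<eta>s j) \<le> rc"
  proof (intro ballI impI)
    fix \<omega> j assume j: "j \<in> J" and h: "kmod M domDM DM \<omega> (\<omega>s j) \<le> im"
    have "dn \<pi>A \<pi>B x M N J \<omega>s \<eta>s \<omega> (\<eta>s j) \<le> mr + kmod M domDM DM \<omega> (\<omega>s j)" by (rule coreA[OF j])
    also have "\<dots> \<le> mr + im" using h by (rule add_left_mono)
    finally show "dn \<pi>A \<pi>B x M N J \<omega>s \<eta>s \<omega> (\<eta>s j) \<le> rc" using rc1 by simp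
  qed
  have P2: "\<forall>\<eta> \<in> Dball domDN DN 1. \<forall>j\<in>J. kmod N domDN DN \<eta> (\<eta>s j) \<le> im \<longrightarrow>
        dn \<pi>A \<pi>B x M N J \<omega>s \<eta>s (\<omega>s j) \<eta> \<le> rc"
  proof (intro ballI impI)
    fix \<eta> j assume j: "j \<in> J" and h: "kmod N domDN DN \<eta> (\<eta>s j) \<le> im"
    have "dn \<pi>A \<pi>B x M N J \<omega>s \<eta>s (\<omega>s j) \<eta> \<le> mr + kmod N domDN DN \<eta> (\<eta>s j)" by (rule coreB[OF j])
    also have "\<dots> \<le> mr + im" using h by (rule add_left_mono)
    finally show "dn \<pi>A \<pi>B x M N J \<omega>s \<eta>s (\<omega>s j) \<eta> \<le> rc" using rc1 by simp
  qed
  obtain j0 where j0: "j0 \<in> J" using Jne by blast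
  have dn0: "0 \<le> dn \<pi>A \<pi>B x M N J \<omega>s \<eta>s \<omega> \<eta>" for \<omega> \<eta>
    unfolding dn_def by (rule SUP_upper2[OF j0]) (simp add: bn_def le_max_iff_disj)
  have mr0: "0 \<le> mr" unfolding mr_def modular_reach_def by (rule SUP_upper2[OF j0]) (rule dn0)
  have kM0: "0 \<le> kmod M domDM DM a b" for a b
    unfolding kmod_def using anc[OF j0] by (intro SUP_upper2[of "\<omega>s j0"]) auto
  have kN0: "0 \<le> kmod N domDN DN a b" for a b
    unfolding kmod_def using anc[OF j0] by (intro SUP_upper2[of "\<eta>s j0"]) auto
  have ksM: "kmod M domDM DM a b = kmod M domDM DM b a" for a b
    unfolding kmod_def by (simp add: norm_minus_commute)
  have ksN: "kmod N domDN DN a b = kmod N domDN DN b a" for a b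
    unfolding kmod_def by (simp add: norm_minus_commute)
  have P3: "(SUP \<omega> \<in> Dball domDM DM 1. INF \<eta> \<in> Dball domDN DN 1. dn \<pi>A \<pi>B x M N J \<omega>s \<eta>s \<omega> \<eta>) \<le> rc"
  proof (rule SUP_least)
    fix \<omega> assume w: "\<omega> \<in> Dball domDM DM 1"
    have "(INF \<eta> \<in> Dball domDN DN 1. dn \<pi>A \<pi>B x M N J \<omega>s \<eta>s \<omega> \<eta>) \<le> (INF j\<in>J. mr + kmod M domDM DM (\<omega>s j) \<omega>)"
    proof (rule INF_greatest)
      fix j assume j: "j \<in> J"
      have "(INF \<eta> \<in> Dball domDN DN 1. dn \<pi>A \<pi>B x M N J \<omega>s \<eta>s \<omega> \<eta>) \<le> dn \<pi>A \<pi>B x M N J \<omega>s \<eta>s \<omega> (\<eta>s j)"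
        using anc[OF j] by (intro INF_lower) auto
      also have "\<dots> \<le> mr + kmod M domDM DM (\<omega>s j) \<omega>" using coreA[OF j] by (simp add: ksM)
      finally show "(INF \<eta> \<in> Dball domDN DN 1. dn \<pi>A \<pi>B x M N J \<omega>s \<eta>s \<omega> \<eta>) \<le> mr + kmod M domDM DM (\<omega>s j) \<omega>" .
    qed
    also have "\<dots> = mr + (INF j\<in>J. kmod M domDM DM (\<omega>s j) \<omega>)"
      by (rule INF_ereal_add_right[OF Jne]) (use mr0 kM0 in auto)
    also have "(INF j\<in>J. kmod M domDM DM (\<omega>s j) \<omega>) \<le> im"
    proof -
      have "(INF j\<in>J. kmod M domDM DM (\<omega>s j) \<omega>) = (INF a\<in>\<omega>s ` J. kmod M domDM DM a \<omega>)"
        by (simp add: image_image)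
      also have "\<dots> \<le> (SUP b\<in>Dball domDM DM 1. INF a\<in>\<omega>s ` J. kmod M domDM DM a b)"
        using w by (rule SUP_upper)
      also have "\<dots> \<le> im" unfolding im_def imprint_def Haus_def by (simp add: le_max_iff_disj)
      finally show ?thesis .
    qed
    then have "mr + (INF j\<in>J. kmod M domDM DM (\<omega>s j) \<omega>) \<le> mr + im" by (rule add_left_mono)
    finally show "(INF \<eta> \<in> Dball domDN DN 1. dn \<pi>A \<pi>B x M N J \<omega>s \<eta>s \<omega> \<eta>) \<le> rc" using rc1 by simp
  qed
  have P4: "(SUP \<eta> \<in> Dball domDN DN 1. INF \<omega> \<in> Dball domDM DM 1. dn \<pi>A \<pi>B x M N J \<omega>s \<eta>s \<omega> \<eta>) \<le> rc"
  proof (rule SUP_least)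
    fix \<eta> assume w: "\<eta> \<in> Dball domDN DN 1"
    have "(INF \<omega> \<in> Dball domDM DM 1. dn \<pi>A \<pi>B x M N J \<omega>s \<eta>s \<omega> \<eta>) \<le> (INF j\<in>J. mr + kmod N domDN DN (\<eta>s j) \<eta>)"
    proof (rule INF_greatest)
      fix j assume j: "j \<in> J"
      have "(INF \<omega> \<in> Dball domDM DM 1. dn \<pi>A \<pi>B x M N J \<omega>s \<eta>s \<omega> \<eta>) \<le> dn \<pi>A \<pi>B x M N J \<omega>s \<eta>s (\<omega>s j) \<eta>"
        using anc[OF j] by (intro INF_lower) auto
      also have "\<dots> \<le> mr + kmod N domDN DN (\<eta>s j) \<eta>" using coreB[OF j] by (simp add: ksN)
      finally show "(INF \<omega> \<in> Dball domDM DM 1. dn \<pi>A \<pi>B x M N J \<omega>s \<eta>s \<omega> \<eta>) \<le> mr + kmod N domDN DN (\<eta>s j) \<eta>" .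
    qed
    also have "\<dots> = mr + (INF j\<in>J. kmod N domDN DN (\<eta>s j) \<eta>)"
      by (rule INF_ereal_add_right[OF Jne]) (use mr0 kN0 in auto)
    also have "(INF j\<in>J. kmod N domDN DN (\<eta>s j) \<eta>) \<le> im"
    proof -
      have "(INF j\<in>J. kmod N domDN DN (\<eta>s j) \<eta>) = (INF a\<in>\<eta>s ` J. kmod N domDN DN a \<eta>)"
        by (simp add: image_image)
      also have "\<dots> \<le> (SUP b\<in>Dball domDN DN 1. INF a\<in>\<eta>s ` J. kmod N domDN DN a b)"
        using w by (rule SUP_upper)
      also have "\<dots> \<le> im" unfolding im_def imprint_def Haus_def by (simp add: le_max_iff_disj)
      finally show ?thesis .
    qed
    then have "mr + (INF j\<in>J. kmod N domDN DN (\<eta>s j) \<eta>) \<le> mr + im" by (rule add_left_mono)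
    finally show "(INF \<omega> \<in> Dball domDM DM 1. dn \<pi>A \<pi>B x M N J \<omega>s \<eta>s \<omega> \<eta>) \<le> rc" using rc1 by simp
  qed
  have P0: "max (SUP a \<in> {a \<in> sa A. a \<in> domLA \<and> LA a \<le> 1}. INF b \<in> {b \<in> sa B. b \<in> domLB \<and> LB b \<le> 1}.
                    ereal (bn \<pi>A \<pi>B x a b))
               (SUP b \<in> {b \<in> sa B. b \<in> domLB \<and> LB b \<le> 1}. INF a \<in> {a \<in> sa A. a \<in> domLA \<and> LA a \<le> 1}.
                    ereal (bn \<pi>A \<pi>B x a b)) \<le> rc"
    using rc0 unfolding basic_reach_def .
  show ?thesis
    using P0 P1 P2 P3 P4 unfolding rc_def im_def by simp
qed

end
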